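(* Let $C$ be a computad, $d\ge1$, and $c\in\mathrm{Cell}_d(C)$ a $d$-cell with $\mathrm{supp}_d(c)=\emptyset$. Then $\mathrm{supp}_{d-1}(\mathrm{src}\,c)=\mathrm{supp}_{d-1}(\mathrm{tgt}\,c)=\mathrm{supp}_{d-1}(c)$.
   Context: Computads (Dean et al.) are defined by induction on dimension together with their cells: an $n$-computad consists of an $(n-1)$-computad, a set $V_n$ of $n$-dimensional generators, and an attaching function sending each $v\in V_n$ to a pair of parallel $(n-1)$-cells; a computad is a compatible sequence of $n$-computads. The $n$-cells $\mathrm{Cell}_n(C)$ are generated by (i) $\mathrm{var}\,v$ for $v\in V_n$, with source and target given by the attaching function, (ii) $\mathrm{coh}(B,A,f)$ where $B$ is a Batanin tree with $\dim B\le n$, $A$ is a full $(n-1)$-sphere of the pasting diagram $\mathrm{Pos}(B)$, and $f$ assigns to each $k$-position of $B$ a $k$-cell of $C$ compatibly with sources and targets; its source and target are those of $A$ with $f$ substituted. Support: $\mathrm{supp}_n(\mathrm{var}\,v)=\{v\}$ and $\mathrm{supp}_n(\mathrm{coh}(B,A,f))=\bigcup_{p\in\mathrm{Pos}_n(B)}\mathrm{supp}_n(f(p))$ for an $n$-cell; more generally, for $k\le n$, $\mathrm{supp}_k(c)$ is the set of $k$-dimensional generators used in the definition of $c$ or of its iterated sources and targets. *)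

theory Defs
  imports Main
begin

datatype tree = Br "tree list"

fun tree_dim :: "tree \<Rightarrow> nat" where
  "tree_dim (Br ts) = (if ts = [] then 0 else Suc (Max (set (map tree_dim ts))))"

text \<open>Positions of B = Br [B_0,...,B_(m-1)]: the 0-positions are [i] for i \<le> m;
  the (k+1)-positions are i # p with i < m and p a k-position of B_i.
  A position p has dimension length p - 1.\<close>

inductive ispos :: "tree \<Rightarrow> nat list \<Rightarrow> bool" where
  pos0: "i \<le> length ts \<Longrightarrow> ispos (Br ts) [i]"
| posS: "i < length ts \<Longrightarrow> ispos (ts ! i) p \<Longrightarrow> ispos (Br ts) (i # p)"

fun psrc :: "nat list \<Rightarrow> nat list" where
  "psrc (i # p) = (if length p = 1 then [i] else i # psrc p)"
| "psrc [] = []"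

fun ptgt :: "nat list \<Rightarrow> nat list" where
  "ptgt (i # p) = (if length p = 1 then [Suc i] else i # ptgt p)"
| "ptgt [] = []"

text \<open>Positions of the source (s = True) resp. target (s = False) n-boundary of B.\<close>

inductive inbd :: "bool \<Rightarrow> nat \<Rightarrow> tree \<Rightarrow> nat list \<Rightarrow> bool" where
  bd0s: "inbd True 0 (Br ts) [0]"
| bd0t: "inbd False 0 (Br ts) [length ts]"
| bdS0: "i \<le> length ts \<Longrightarrow> inbd s (Suc n) (Br ts) [i]"
| bdSS: "i < length ts \<Longrightarrow> inbd s n (ts ! i) p \<Longrightarrow> inbd s (Suc n) (Br ts) (i # p)"

text \<open>Var v: generator of the ambient computad; PVar p: position p (generator of Pos(B));
  Coh B a b f: the coherence cell coh(B,(a,b),f).\<close>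

datatype 'v tm = Var 'v | PVar "nat list" | Coh tree "'v tm" "'v tm" "nat list \<Rightarrow> 'v tm"

primrec subst :: "(nat list \<Rightarrow> 'v tm) \<Rightarrow> 'v tm \<Rightarrow> 'v tm" where
  "subst f (Var v) = Var v"
| "subst f (PVar p) = f p"
| "subst f (Coh B a b g) = Coh B a b (\<lambda>p. subst f (g p))"

text \<open>Generators occurring in a term (the sphere of a coherence lives in Pos(B), not in
  the ambient computad, so it is not traversed).\<close>

primrec occ :: "'v tm \<Rightarrow> 'v tm set" where
  "occ (Var v) = {Var v}"
| "occ (PVar p) = {PVar p}"
| "occ (Coh B a b f) = (\<Union>p\<in>{p. ispos B p}. occ (f p))"

text \<open>A generic "generator structure": G n = generators of dimension n (as terms),
  At g = attaching sphere of generator g.\<close>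

definition tsrc :: "('v tm \<Rightarrow> 'v tm \<times> 'v tm) \<Rightarrow> 'v tm \<Rightarrow> 'v tm" where
  "tsrc At t = (case t of Coh B a b f \<Rightarrow> subst f a | _ \<Rightarrow> fst (At t))"

definition ttgt :: "('v tm \<Rightarrow> 'v tm \<times> 'v tm) \<Rightarrow> 'v tm \<Rightarrow> 'v tm" where
  "ttgt At t = (case t of Coh B a b f \<Rightarrow> subst f b | _ \<Rightarrow> snd (At t))"

fun iterbd :: "('v tm \<Rightarrow> 'v tm \<times> 'v tm) \<Rightarrow> nat \<Rightarrow> 'v tm \<Rightarrow> 'v tm set" where
  "iterbd At 0 t = {t}"
| "iterbd At (Suc j) t = (\<Union>t'\<in>iterbd At j t. {tsrc At t', ttgt At t'})"

definition gsupp :: "(nat \<Rightarrow> 'v tm set) \<Rightarrow> ('v tm \<Rightarrow> 'v tm \<times> 'v tm) \<Rightarrow> nat \<Rightarrow> nat \<Rightarrow> 'v tm \<Rightarrow> 'v tm set" where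
  "gsupp G At k n t = {g \<in> G k. \<exists>j\<le>n - k. \<exists>t'\<in>iterbd At j t. g \<in> occ t'}"

definition posG :: "tree \<Rightarrow> nat \<Rightarrow> 'v tm set" where
  "posG B n = PVar ` {p. ispos B p \<and> length p = Suc n}"

definition posAt :: "'v tm \<Rightarrow> 'v tm \<times> 'v tm" where
  "posAt t = (case t of PVar p \<Rightarrow> (PVar (psrc p), PVar (ptgt p)) | _ \<Rightarrow> (t, t))"

text \<open>(a,b) is a full m-sphere of Pos(B): full support of a (all dimensions \<le> m) is the
  source m-boundary of B, and of b the target m-boundary.\<close>

definition full_sphere :: "tree \<Rightarrow> nat \<Rightarrow> 'v tm \<Rightarrow> 'v tm \<Rightarrow> bool" where
  "full_sphere B m a b \<longleftrightarrow>
     (\<Union>k\<le>m. gsupp (posG B) posAt k m a) = PVar ` {p. inbd True m B p} \<and>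
     (\<Union>k\<le>m. gsupp (posG B) posAt k m b) = PVar ` {p. inbd False m B p}"

inductive cell :: "(nat \<Rightarrow> 'v tm set) \<Rightarrow> ('v tm \<Rightarrow> 'v tm \<times> 'v tm) \<Rightarrow> nat \<Rightarrow> 'v tm \<Rightarrow> bool" where
  gen: "t \<in> G n \<Longrightarrow> cell G At n t"
| coh: "\<lbrakk> tree_dim B \<le> Suc m;
          cell (posG B) posAt m a; cell (posG B) posAt m b;
          m = 0 \<or> (tsrc posAt a = tsrc posAt b \<and> ttgt posAt a = ttgt posAt b);
          full_sphere B m a b;
          \<forall>p. ispos B p \<longrightarrow> cell G At (length p - 1) (f p);
          \<forall>p. ispos B p \<and> length p \<ge> 2 \<longrightarrow>
               tsrc At (f p) = f (psrc p) \<and> ttgt At (f p) = f (ptgt p) \<rbrakk>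
        \<Longrightarrow> cell G At (Suc m) (Coh B a b f)"

definition cG :: "(nat \<Rightarrow> 'v set) \<Rightarrow> nat \<Rightarrow> 'v tm set" where
  "cG V n = Var ` V n"

definition cAt :: "('v \<Rightarrow> 'v tm \<times> 'v tm) \<Rightarrow> 'v tm \<Rightarrow> 'v tm \<times> 'v tm" where
  "cAt att t = (case t of Var v \<Rightarrow> att v | _ \<Rightarrow> (t, t))"

definition computad :: "(nat \<Rightarrow> 'v set) \<Rightarrow> ('v \<Rightarrow> 'v tm \<times> 'v tm) \<Rightarrow> bool" where
  "computad V att \<longleftrightarrow>
     (\<forall>n k. n \<noteq> k \<longrightarrow> V n \<inter> V k = {}) \<and>
     (\<forall>m v. v \<in> V (Suc m) \<longrightarrow>
        cell (cG V) (cAt att) m (fst (att v)) \<and> cell (cG V) (cAt att) m (snd (att v)) \<and>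
        (m = 0 \<or> (tsrc (cAt att) (fst (att v)) = tsrc (cAt att) (snd (att v)) \<and>
                  ttgt (cAt att) (fst (att v)) = ttgt (cAt att) (snd (att v)))))"

definition Cell :: "(nat \<Rightarrow> 'v set) \<Rightarrow> ('v \<Rightarrow> 'v tm \<times> 'v tm) \<Rightarrow> nat \<Rightarrow> 'v tm set" where
  "Cell V att n = {c. cell (cG V) (cAt att) n c}"

definition src :: "('v \<Rightarrow> 'v tm \<times> 'v tm) \<Rightarrow> 'v tm \<Rightarrow> 'v tm" where
  "src att c = tsrc (cAt att) c"

definition tgt :: "('v \<Rightarrow> 'v tm \<times> 'v tm) \<Rightarrow> 'v tm \<Rightarrow> 'v tm" where
  "tgt att c = ttgt (cAt att) c"

definition supp :: "(nat \<Rightarrow> 'v set) \<Rightarrow> ('v \<Rightarrow> 'v tm \<times> 'v tm) \<Rightarrow> nat \<Rightarrow> nat \<Rightarrow> 'v tm \<Rightarrow> 'v set" where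
  "supp V att k n c = {v. Var v \<in> gsupp (cG V) (cAt att) k n c}"

end

theory Submission
  imports Defs
begin


lemma ispos_ne: "ispos B p \<Longrightarrow> p \<noteq> []"
  by (induction rule: ispos.induct) auto

lemma ispos_len: "ispos B p \<Longrightarrow> length p \<le> Suc (tree_dim B)"
proof (induction rule: ispos.induct)
  case (pos0 i ts) then show ?case by simp
next
  case (posS i ts p)
  have "ts ! i \<in> set ts" using posS.hyps(1) by simp
  hence "tree_dim (ts ! i) \<in> set (map tree_dim ts)" by simp
  hence "tree_dim (ts ! i) \<le> Max (set (map tree_dim ts))" by simp
  moreover have "ts \<noteq> []" using posS.hyps(1) by auto
  ultimately show ?case using posS.IH by simp
qed

lemma ispos_bd: "ispos B q \<Longrightarrow> length q \<ge> 2 \<Longrightarrow>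
   ispos B (psrc q) \<and> ispos B (ptgt q) \<and> length (psrc q) = length q - 1 \<and> length (ptgt q) = length q - 1"
proof (induction rule: ispos.induct)
  case (pos0 i ts) then show ?case by simp
next
  case (posS i ts p)
  show ?case
  proof (cases "length p = 1")
    case True then show ?thesis using posS.hyps by (auto intro: ispos.intros)
  next
    case False
    then have "length p \<ge> 2" using ispos_ne[OF posS.hyps(2)] by (cases p) (auto simp: Suc_le_eq)
    then show ?thesis using posS False by (auto intro: ispos.intros)
  qed
qed

lemma cell_occ: "cell G At n t \<Longrightarrow> (\<forall>k. \<forall>g\<in>G k. occ g \<subseteq> {g}) \<Longrightarrow> occ t \<subseteq> (\<Union>k\<le>n. G k)"
proof (induction rule: cell.induct)
  case (gen t G n At) then show ?case by auto
next
  case (coh B m a b G At f)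
  show ?case
  proof
    fix x assume "x \<in> occ (Coh B a b f)"
    then obtain p where p: "ispos B p" "x \<in> occ (f p)" by auto
    have "length p \<le> Suc (Suc m)" using ispos_len[OF p(1)] coh.hyps(1) by simp
    with coh.IH coh.prems p show "x \<in> (\<Union>k\<le>Suc m. G k)" by fastforce
  qed
qed

lemma occ_subst: "occ (subst f a) = (\<Union>q\<in>{q. PVar q \<in> occ a}. occ (f q)) \<union> {x\<in>occ a. \<forall>q. x \<noteq> PVar q}"
proof (induction a)
  case (Coh x1a x2a x3 x4)
  then show ?case by auto
qed auto

fun nu :: "tree \<Rightarrow> nat list \<Rightarrow> nat" where
  "nu (Br ts) [] = 0" | "nu (Br ts) [i] = i" | "nu (Br ts) (i # j # p) = nu (ts ! i) (j # p)"

fun mu :: "tree \<Rightarrow> nat list \<Rightarrow> nat" where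
  "mu (Br ts) [] = 0" | "mu (Br ts) [i] = length ts - i" | "mu (Br ts) (i # j # p) = mu (ts ! i) (j # p)"

lemma psrc_cons: "length q \<ge> 2 \<Longrightarrow> \<exists>x y. psrc q = x # y" by (cases q) auto
lemma ptgt_cons: "length q \<ge> 2 \<Longrightarrow> \<exists>x y. ptgt q = x # y" by (cases q) auto

lemma chainA_S: "ispos B p \<Longrightarrow> length p = Suc m \<Longrightarrow> \<not> inbd True m B p \<Longrightarrow>
  \<exists>q. ispos B q \<and> length q = Suc (Suc m) \<and> ptgt q = p \<and> nu B (psrc q) < nu B p"
proof (induction arbitrary: m rule: ispos.induct)
  case (pos0 i ts)
  then obtain i' where i: "i = Suc i'" by (cases i) (auto intro: inbd.intros)
  obtain us where us: "ts ! i' = Br us" by (cases "ts ! i'")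
  have "ispos (Br ts) [i', 0]" using pos0 i us by (auto intro!: ispos.intros)
  then show ?case using pos0 i by (intro exI[of _ "[i', 0]"]) auto
next
  case (posS i ts p)
  obtain m' where m: "m = Suc m'" using ispos_ne[OF posS.hyps(2)] posS.prems by (cases m) auto
  have "\<not> inbd True m' (ts ! i) p" using posS.prems posS.hyps m by (auto intro: inbd.intros)
  then obtain q where q: "ispos (ts ! i) q" "length q = Suc (Suc m')" "ptgt q = p" "nu (ts ! i) (psrc q) < nu (ts ! i) p"
    using posS.IH posS.prems m by auto
  obtain x y where xy: "psrc q = x # y" using psrc_cons q(2) by fastforce
  obtain x' y' where xy': "p = x' # y'" using ispos_ne[OF posS.hyps(2)] by (cases p) auto
  show ?case
    apply (rule exI[of _ "i # q"])
    using q xy xy' posS.hyps m by (auto intro: ispos.intros)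
qed

lemma chainA_T: "ispos B p \<Longrightarrow> length p = Suc m \<Longrightarrow> \<not> inbd False m B p \<Longrightarrow>
  \<exists>q. ispos B q \<and> length q = Suc (Suc m) \<and> psrc q = p \<and> mu B (ptgt q) < mu B p"
proof (induction arbitrary: m rule: ispos.induct)
  case (pos0 i ts)
  then have i: "i < length ts" by (cases "i = length ts") (auto intro: inbd.intros)
  obtain us where us: "ts ! i = Br us" by (cases "ts ! i")
  have "ispos (Br ts) [i, 0]" using pos0 i us by (auto intro!: ispos.intros)
  then show ?case using pos0 i by (intro exI[of _ "[i, 0]"]) auto
next
  case (posS i ts p)
  obtain m' where m: "m = Suc m'" using ispos_ne[OF posS.hyps(2)] posS.prems by (cases m) auto
  have "\<not> inbd False m' (ts ! i) p" using posS.prems posS.hyps m by (auto intro: inbd.intros)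
  then obtain q where q: "ispos (ts ! i) q" "length q = Suc (Suc m')" "psrc q = p" "mu (ts ! i) (ptgt q) < mu (ts ! i) p"
    using posS.IH posS.prems m by auto
  obtain x y where xy: "ptgt q = x # y" using ptgt_cons q(2) by fastforce
  obtain x' y' where xy': "p = x' # y'" using ispos_ne[OF posS.hyps(2)] by (cases p) auto
  show ?case
    apply (rule exI[of _ "i # q"])
    using q xy xy' posS.hyps m by (auto intro: ispos.intros)
qed

lemma chain_S:
  assumes step: "\<And>q. ispos B q \<Longrightarrow> length q = Suc (Suc m) \<Longrightarrow> X (ptgt q) \<subseteq> X (psrc q)"
  shows "ispos B p \<Longrightarrow> length p = Suc m \<Longrightarrow> X p \<subseteq> (\<Union>q\<in>{q. ispos B q \<and> length q = Suc m \<and> inbd True m B q}. X q)"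
proof (induction "nu B p" arbitrary: p rule: less_induct)
  case less
  show ?case
  proof (cases "inbd True m B p")
    case True then show ?thesis using less.prems by auto
  next
    case False
    then obtain q where q: "ispos B q" "length q = Suc (Suc m)" "ptgt q = p" "nu B (psrc q) < nu B p"
      using chainA_S less.prems by blast
    have "ispos B (psrc q)" "length (psrc q) = Suc m" using ispos_bd[OF q(1)] q(2) by auto
    then have "X (psrc q) \<subseteq> (\<Union>q\<in>{q. ispos B q \<and> length q = Suc m \<and> inbd True m B q}. X q)"
      using less.hyps q(4) by blast
    with step[OF q(1,2)] q(3) show ?thesis by blast
  qed
qed

lemma chain_T:
  assumes step: "\<And>q. ispos B q \<Longrightarrow> length q = Suc (Suc m) \<Longrightarrow> X (psrc q) \<subseteq> X (ptgt q)"
  shows "ispos B p \<Longrightarrow> length p = Suc m \<Longrightarrow> X p \<subseteq> (\<Union>q\<in>{q. ispos B q \<and> length q = Suc m \<and> inbd False m B q}. X q)"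
proof (induction "mu B p" arbitrary: p rule: less_induct)
  case less
  show ?case
  proof (cases "inbd False m B p")
    case True then show ?thesis using less.prems by auto
  next
    case False
    then obtain q where q: "ispos B q" "length q = Suc (Suc m)" "psrc q = p" "mu B (ptgt q) < mu B p"
      using chainA_T less.prems by blast
    have "ispos B (ptgt q)" "length (ptgt q) = Suc m" using ispos_bd[OF q(1)] q(2) by auto
    then have "X (ptgt q) \<subseteq> (\<Union>q\<in>{q. ispos B q \<and> length q = Suc m \<and> inbd False m B q}. X q)"
      using less.hyps q(4) by blast
    with step[OF q(1,2)] q(3) show ?thesis by blast
  qed
qed

definition Gm :: "(nat \<Rightarrow> 'v set) \<Rightarrow> nat \<Rightarrow> 'v tm set \<Rightarrow> 'v set" where
  "Gm V k X = {v \<in> V k. Var v \<in> X}"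

lemma cG_occ: "\<forall>k. \<forall>g\<in>cG V k. occ g \<subseteq> {g}" by (auto simp: cG_def)
lemma posG_occ: "\<forall>k. \<forall>g\<in>posG B k. occ g \<subseteq> {g}" by (auto simp: posG_def)

lemma lowdim:
  assumes disj: "\<forall>n k. n \<noteq> k \<longrightarrow> V n \<inter> V k = {}"
  and "cell (cG V) At k t" "k < m"
  shows "Gm V m (occ t) = {}"
proof -
  have "occ t \<subseteq> (\<Union>j\<le>k. cG V j)" using cell_occ[OF assms(2) cG_occ] .
  note sub = this
  have "v \<notin> Gm V m (occ t)" for v
  proof
    assume "v \<in> Gm V m (occ t)"
    then have vm: "v \<in> V m" "Var v \<in> occ t" by (auto simp: Gm_def)
    then obtain j where j: "j \<le> k" "Var v \<in> cG V j" using sub by blast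
    then have "v \<in> V j" by (auto simp: cG_def)
    moreover have "j \<noteq> m" using j(1) assms(3) by simp
    then have "V j \<inter> V m = {}" using disj by blast
    ultimately show False using vm(1) by blast
  qed
  then show ?thesis by blast
qed

lemma sphere_part:
  fixes a :: "'v tm"
  assumes oa: "occ a \<subseteq> (\<Union>k\<le>m. posG B k)"
  and fs: "(\<Union>k\<le>m. gsupp (posG B) posAt k m a) = PVar ` {p. inbd s m B p}"
  and lowY: "\<And>p. ispos B p \<Longrightarrow> length p < Suc m \<Longrightarrow> Gm V m (occ (f p)) = {}"
  shows "Gm V m (occ (subst f a)) = (\<Union>q\<in>{q. ispos B q \<and> length q = Suc m \<and> inbd s m B q}. Gm V m (occ (f q)))"
proof -
  have nopv: "{x\<in>occ a. \<forall>q. x \<noteq> PVar q} = {}" using oa by (auto simp: posG_def)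
  have os: "occ (subst f a) = (\<Union>q\<in>{q. PVar q \<in> occ a}. occ (f q))"
    unfolding occ_subst nopv by simp
  show ?thesis
  proof (rule set_eqI, rule iffI)
    fix v assume "v \<in> Gm V m (occ (subst f a))"
    then have v: "v \<in> V m" "Var v \<in> occ (subst f a)" by (simp_all add: Gm_def)
    then obtain q where q: "(PVar q :: 'v tm) \<in> occ a" "Var v \<in> occ (f q)" unfolding os by blast
    have vq: "v \<in> Gm V m (occ (f q))" using v(1) q(2) by (simp add: Gm_def)
    have "(PVar q :: 'v tm) \<in> (\<Union>k\<le>m. posG B k)" using oa q(1) by blast
    then obtain k where k: "k \<le> m" "(PVar q :: 'v tm) \<in> posG B k" by blast
    then have qp: "ispos B q" "length q = Suc k" by (auto simp: posG_def)
    have km: "k = m"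
    proof (rule ccontr)
      assume "k \<noteq> m"
      then have "length q < Suc m" using qp(2) k(1) by simp
      then show False using lowY[OF qp(1)] vq by simp
    qed
    have "\<exists>j\<le>m - m. \<exists>t'\<in>iterbd posAt j a. PVar q \<in> occ t'" using q(1) by auto
    then have "(PVar q :: 'v tm) \<in> gsupp (posG B) posAt m m a" using k(2) km unfolding gsupp_def by blast
    then have "(PVar q :: 'v tm) \<in> PVar ` {p. inbd s m B p}" unfolding fs[symmetric] by blast
    then have "inbd s m B q" by auto
    then show "v \<in> (\<Union>q\<in>{q. ispos B q \<and> length q = Suc m \<and> inbd s m B q}. Gm V m (occ (f q)))"
      using qp km vq by blast
  next
    fix v assume "v \<in> (\<Union>q\<in>{q. ispos B q \<and> length q = Suc m \<and> inbd s m B q}. Gm V m (occ (f q)))"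
    then obtain q where q: "ispos B q" "length q = Suc m" "inbd s m B q" "v \<in> Gm V m (occ (f q))"
      by blast
    have "(PVar q :: 'v tm) \<in> PVar ` {p. inbd s m B p}" using q(3) by blast
    then have "(PVar q :: 'v tm) \<in> (\<Union>k\<le>m. gsupp (posG B) posAt k m a)" unfolding fs .
    then obtain k where k: "k \<le> m" "(PVar q :: 'v tm) \<in> gsupp (posG B) posAt k m a" by blast
    then have "(PVar q :: 'v tm) \<in> posG B k" unfolding gsupp_def by blast
    then have "k = m" using q(2) by (auto simp: posG_def)
    then have "\<exists>t'\<in>iterbd posAt 0 a. PVar q \<in> occ t'" using k(2) unfolding gsupp_def by auto
    then have "(PVar q :: 'v tm) \<in> occ a" by simp
    then have "Var v \<in> occ (subst f a)" using q(4) unfolding os Gm_def by blast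
    then show "v \<in> Gm V m (occ (subst f a))" using q(4) by (simp add: Gm_def)
  qed
qed

lemma main:
  fixes V :: "nat \<Rightarrow> 'v set"
  assumes disj: "\<forall>n k. n \<noteq> k \<longrightarrow> V n \<inter> V k = {}"
  shows "cell G At n t \<Longrightarrow> G = cG V \<Longrightarrow> At = cAt att \<Longrightarrow> n \<ge> 1 \<Longrightarrow> (\<forall>v\<in>V n. Var v \<notin> occ t) \<Longrightarrow>
   Gm V (n-1) (occ (tsrc At t)) = Gm V (n-1) (occ t \<union> occ (tsrc At t) \<union> occ (ttgt At t)) \<and>
   Gm V (n-1) (occ (ttgt At t)) = Gm V (n-1) (occ t \<union> occ (tsrc At t) \<union> occ (ttgt At t))"
proof (induction rule: cell.induct)
  case (gen t G n At)
  then show ?case by (auto simp: cG_def)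
next
  case (coh B m a b G At f)
  define Y where "Y q = Gm V m (occ (f q))" for q
  define S where "S = (\<Union>q\<in>{q. ispos B q \<and> length q = Suc m \<and> inbd True m B q}. Y q)"
  define T where "T = (\<Union>q\<in>{q. ispos B q \<and> length q = Suc m \<and> inbd False m B q}. Y q)"
  have fcell: "cell (cG V) (cAt att) (length p - 1) (f p)" if "ispos B p" for p
    using coh.IH coh.prems that by auto
  have occc: "occ (Coh B a b f) = (\<Union>p\<in>{p. ispos B p}. occ (f p))" by simp
  have KEY: "Y q \<subseteq> Y (psrc q) \<and> Y (psrc q) = Y (ptgt q)"
    if q: "ispos B q" "length q = Suc (Suc m)" for q
  proof -
    have IH: "Gm V m (occ (tsrc At (f q))) = Gm V m (occ (f q) \<union> occ (tsrc At (f q)) \<union> occ (ttgt At (f q))) \<and>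
      Gm V m (occ (ttgt At (f q))) = Gm V m (occ (f q) \<union> occ (tsrc At (f q)) \<union> occ (ttgt At (f q)))"
    proof -
      have nov: "\<forall>v\<in>V (length q - 1). Var v \<notin> occ (f q)" using coh.prems(4) q by auto
      have one: "1 \<le> length q - 1" using q(2) by simp
      note IH0 = conjunct2[OF coh.IH(3)[rule_format, OF q(1)], rule_format, OF coh.prems(1) coh.prems(2) one nov[rule_format]]
      show ?thesis using IH0 unfolding q(2) by simp
    qed
    have e: "tsrc At (f q) = f (psrc q)" "ttgt At (f q) = f (ptgt q)" using coh.hyps(6) q by auto
    have IH2: "Gm V m (occ (f (psrc q))) = Gm V m (occ (f q) \<union> occ (f (psrc q)) \<union> occ (f (ptgt q))) \<and>
      Gm V m (occ (f (ptgt q))) = Gm V m (occ (f q) \<union> occ (f (psrc q)) \<union> occ (f (ptgt q)))"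
      using IH unfolding e .
    have un: "Gm V m (X1 \<union> X2 \<union> X3) = Gm V m X1 \<union> Gm V m X2 \<union> Gm V m X3" for X1 X2 X3
      unfolding Gm_def by blast
    show ?thesis using IH2 unfolding Y_def un by blast
  qed
  have lowY: "Y p = {}" if "ispos B p" "length p < Suc m" for p
  proof -
    have "length p - 1 < m" using ispos_ne[OF that(1)] that(2) by (cases p) auto
    then show ?thesis unfolding Y_def using lowdim[OF disj fcell[OF that(1)]] by simp
  qed
  have Sfact: "Gm V m (occ (subst f a)) = S"
    unfolding S_def Y_def
    by (rule sphere_part[OF cell_occ[OF coh.hyps(2) posG_occ]]) (use coh.hyps(5) lowY in \<open>auto simp: full_sphere_def Y_def\<close>)
  have Tfact: "Gm V m (occ (subst f b)) = T"
    unfolding T_def Y_def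
    by (rule sphere_part[OF cell_occ[OF coh.hyps(3) posG_occ]]) (use coh.hyps(5) lowY in \<open>auto simp: full_sphere_def Y_def\<close>)
  have chS: "Y p \<subseteq> S" if "ispos B p" "length p = Suc m" for p
    unfolding S_def by (rule chain_S[OF _ that]) (use KEY in blast)
  have chT: "Y p \<subseteq> T" if "ispos B p" "length p = Suc m" for p
    unfolding T_def by (rule chain_T[OF _ that]) (use KEY in blast)
  have allY: "Y p \<subseteq> S \<and> Y p \<subseteq> T" if p: "ispos B p" for p
  proof -
    have "length p \<le> Suc (Suc m)" using ispos_len[OF p] coh.hyps(1) by simp
    then consider "length p < Suc m" | "length p = Suc m" | "length p = Suc (Suc m)" by linarith
    then show ?thesis
    proof cases
      case 1 then show ?thesis using lowY p by simp
    next
      case 2 then show ?thesis using chS chT p by blast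
    next
      case 3
      have "ispos B (psrc q) \<and> length (psrc q) = Suc m" if "q = p" for q
        using ispos_bd[OF p] 3 that by simp
      then show ?thesis using KEY[OF p 3] chS chT by blast
    qed
  qed
  have Gc: "Gm V m (occ (Coh B a b f)) = (\<Union>p\<in>{p. ispos B p}. Y p)"
    unfolding occc Y_def Gm_def by blast
  have SG: "S \<subseteq> Gm V m (occ (Coh B a b f))" "T \<subseteq> Gm V m (occ (Coh B a b f))"
    unfolding Gc S_def T_def by blast+
  have GS: "Gm V m (occ (Coh B a b f)) \<subseteq> S \<inter> T" unfolding Gc using allY by blast
  have un: "Gm V m (X1 \<union> X2 \<union> X3) = Gm V m X1 \<union> Gm V m X2 \<union> Gm V m X3" for X1 X2 X3
    unfolding Gm_def by blast
  have ts: "tsrc At (Coh B a b f) = subst f a" "ttgt At (Coh B a b f) = subst f b"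
    by (simp_all add: tsrc_def ttgt_def)
  have e1: "Gm V m (occ (subst f a)) = Gm V m (occ (Coh B a b f))" using Sfact SG GS by blast
  have e2: "Gm V m (occ (subst f b)) = Gm V m (occ (Coh B a b f))" using Tfact SG GS by blast
  have sm: "Suc m - 1 = m" by simp
  show ?case unfolding sm ts un e1 e2 by simp
qed


theorem lemma5p6:
  fixes V :: "nat \<Rightarrow> 'v set" and att :: "'v \<Rightarrow> 'v tm \<times> 'v tm"
    and d :: nat and c :: "'v tm"
  assumes "computad V att"
    and "d \<ge> 1"
    and "c \<in> Cell V att d"
    and "supp V att d d c = {}"
  shows "supp V att (d - 1) (d - 1) (src att c) = supp V att (d - 1) d c
       \<and> supp V att (d - 1) (d - 1) (tgt att c) = supp V att (d - 1) d c"
proof -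
  have disj: "\<forall>n k. n \<noteq> k \<longrightarrow> V n \<inter> V k = {}" using assms(1) unfolding computad_def by blast
  have cl: "cell (cG V) (cAt att) d c" using assms(3) unfolding Cell_def by simp
  have nov: "\<forall>v\<in>V d. Var v \<notin> occ c"
    using assms(4) unfolding supp_def gsupp_def cG_def by fastforce
  have M: "Gm V (d-1) (occ (tsrc (cAt att) c)) = Gm V (d-1) (occ c \<union> occ (tsrc (cAt att) c) \<union> occ (ttgt (cAt att) c)) \<and>
   Gm V (d-1) (occ (ttgt (cAt att) c)) = Gm V (d-1) (occ c \<union> occ (tsrc (cAt att) c) \<union> occ (ttgt (cAt att) c))"
    using main[OF disj cl refl refl assms(2) nov] .
  have s0: "supp V att k k t = Gm V k (occ t)" for k t
    unfolding supp_def gsupp_def Gm_def cG_def by auto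
  have s1: "supp V att k (Suc k) t = Gm V k (occ t \<union> occ (tsrc (cAt att) t) \<union> occ (ttgt (cAt att) t))" for k t
  proof -
    have j: "j \<le> Suc k - k \<longleftrightarrow> j = 0 \<or> j = 1" for j by auto
    show ?thesis unfolding supp_def gsupp_def Gm_def cG_def j by auto
  qed
  obtain e where e: "d = Suc e" using assms(2) by (cases d) auto
  have dd: "d - 1 = e" using e by simp
  show ?thesis using M unfolding dd unfolding e src_def tgt_def s0 s1 by simp
qed

end
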